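(* Let $\pi=(\pi_n^{n+1}\colon(X_{n+1},f_{n+1})\to(X_n,f_n))_{n\ge1}$ be an inverse sequence of equivariant maps satisfying MLC(1), and let $(X,f)=\lim_\pi(X_n,f_n)$. Suppose $Y_n\subset X_n$, $n\ge1$, are closed $f_n$-invariant subsets such that (1) $\pi_n^{n+1}(Y_{n+1})\subset Y_n$ for every $n\ge1$, and (2) every $x=(x_n)_{n\ge1}\in X$ satisfies $x_n\in Y_n$ for all $n\ge1$. Let $g_n=f_n|_{Y_n}$ and $\tilde\pi_n^{n+1}=\pi_n^{n+1}|_{Y_{n+1}}\colon Y_{n+1}\to Y_n$. Then the inverse sequence $\tilde\pi=(\tilde\pi_n^{n+1}\colon(Y_{n+1},g_{n+1})\to(Y_n,g_n))_{n\ge1}$ satisfies MLC(1).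
   Context: Each $X_n$ is a compact metric space, $f_n$ a continuous self-map, $\pi_n^{n+1}\colon X_{n+1}\to X_n$ continuous with $f_n\circ\pi_n^{n+1}=\pi_n^{n+1}\circ f_{n+1}$. $X=\{(x_n)\in\prod_n X_n:\pi_n^{n+1}(x_{n+1})=x_n\ \forall n\}$ and $f((x_n))=(f_n(x_n))$. For $m\ge n$, $\pi_n^m=\pi_n^{n+1}\circ\cdots\circ\pi_{m-1}^m$ ($\pi_n^n$ the identity). An inverse sequence $(p_n\colon Z_{n+1}\to Z_n)$ satisfies MLC(1) if $p_n(Z_{n+1})=p_n(p_{n+1}(Z_{n+2}))$ for every $n\ge1$. *)

theory Defs
  imports "HOL-Analysis.Analysis"
begin

text \<open>Inverse sequences are indexed by nat starting at 0 (shift of the paper's n \<ge> 1).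
  Bonding map p n : Z (Suc n) \<rightarrow> Z n.\<close>

definition MLC1 :: "(nat \<Rightarrow> 'a set) \<Rightarrow> (nat \<Rightarrow> 'a \<Rightarrow> 'a) \<Rightarrow> bool" where
  "MLC1 Z p \<longleftrightarrow> (\<forall>n. p n ` Z (Suc n) = p n ` (p (Suc n) ` Z (Suc (Suc n))))"

definition inverse_limit :: "(nat \<Rightarrow> 'a set) \<Rightarrow> (nat \<Rightarrow> 'a \<Rightarrow> 'a) \<Rightarrow> (nat \<Rightarrow> 'a) set" where
  "inverse_limit Z p = {x. (\<forall>n. x n \<in> Z n) \<and> (\<forall>n. p n (x (Suc n)) = x n)}"

end

theory Submission
  imports Defs
begin

lemma lift_thread:
  fixes X :: "nat \<Rightarrow> 'a set" and p :: "nat \<Rightarrow> 'a \<Rightarrow> 'a"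
  assumes p_maps: "\<And>n. p n ` X (Suc n) \<subseteq> X n"
    and mlc: "MLC1 X p"
    and a: "a \<in> p k ` X (Suc k)"
  shows "\<exists>x \<in> inverse_limit X p. x k = a"
proof -
  let ?S = "\<lambda>k. p k ` X (Suc k)"
  have surj: "\<exists>c. c \<in> ?S (Suc j) \<and> p j c = b" if "b \<in> ?S j" for j b
  proof -
    from mlc that have "b \<in> p j ` p (Suc j) ` X (Suc (Suc j))"
      unfolding MLC1_def by blast
    then show ?thesis by blast
  qed
  define g where "g = (\<lambda>j b. SOME c. c \<in> ?S (Suc j) \<and> p j c = b)"
  have g: "g j b \<in> ?S (Suc j) \<and> p j (g j b) = b" if "b \<in> ?S j" for j b
    unfolding g_def using someI_ex[OF surj[OF that]] .
  define u where "u = rec_nat a (\<lambda>i v. g (k + i) v)"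
  have u0: "u 0 = a" and uS: "\<And>i. u (Suc i) = g (k + i) (u i)" by (simp_all add: u_def)
  have uS_in: "u i \<in> ?S (k + i)" for i
    by (induction i) (use a g in \<open>auto simp: u0 uS\<close>)
  define d where "d = rec_nat a (\<lambda>j v. p (k - Suc j) v)"
  have d0: "d 0 = a" and dS: "\<And>j. d (Suc j) = p (k - Suc j) (d j)" by (simp_all add: d_def)
  have d_in: "j \<le> k \<Longrightarrow> d j \<in> X (k - j)" for j
  proof (induction j)
    case 0 then show ?case using a p_maps d0 by auto
  next
    case (Suc j)
    then have "d j \<in> X (Suc (k - Suc j))" by (simp add: Suc_diff_Suc)
    then show ?case using p_maps dS by blast
  qed
  define x where "x = (\<lambda>m. if k \<le> m then u (m - k) else d (k - m))"
  have "x \<in> inverse_limit X p"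
    unfolding inverse_limit_def
  proof (intro CollectI conjI allI)
    fix m
    show "x m \<in> X m"
    proof (cases "k \<le> m")
      case True
      then show ?thesis using uS_in[of "m - k"] p_maps unfolding x_def by auto
    next
      case False
      then show ?thesis using d_in[of "k - m"] unfolding x_def by auto
    qed
    show "p m (x (Suc m)) = x m"
    proof (cases "k \<le> m")
      case True
      then have "Suc m - k = Suc (m - k)" by simp
      then show ?thesis using True g[OF uS_in[of "m - k"]] unfolding x_def by (simp add: uS)
    next
      case False
      then have e: "k - m = Suc (k - Suc m)" by simp
      show ?thesis
      proof (cases "Suc m = k")
        case True
        then have "k - Suc 0 = m" by simp
        then show ?thesis unfolding x_def using e True by (simp add: dS d0 u0)
      next
        case False
        then show ?thesis unfolding x_def using e \<open>\<not> k \<le> m\<close> by (simp add: dS)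
      qed
    qed
  qed
  moreover have "x k = a" unfolding x_def by (simp add: u0)
  ultimately show ?thesis by blast
qed

theorem lemma3p4:
  fixes X Y :: "nat \<Rightarrow> 'a::metric_space set"
    and f p :: "nat \<Rightarrow> 'a \<Rightarrow> 'a"
  assumes X_compact: "\<And>n. compact (X n)"
    and f_cont: "\<And>n. continuous_on (X n) (f n)"
    and f_maps: "\<And>n. f n ` X n \<subseteq> X n"
    and p_cont: "\<And>n. continuous_on (X (Suc n)) (p n)"
    and p_maps: "\<And>n. p n ` X (Suc n) \<subseteq> X n"
    and equivariant: "\<And>n x. x \<in> X (Suc n) \<Longrightarrow> f n (p n x) = p n (f (Suc n) x)"
    and mlc: "MLC1 X p"
    and Y_sub: "\<And>n. Y n \<subseteq> X n"
    and Y_closed: "\<And>n. closed (Y n)"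
    and Y_inv: "\<And>n. f n ` Y n \<subseteq> Y n"
    and cond1: "\<And>n. p n ` Y (Suc n) \<subseteq> Y n"
    and cond2: "\<And>x n. x \<in> inverse_limit X p \<Longrightarrow> x n \<in> Y n"
  shows "MLC1 Y p"
  unfolding MLC1_def
proof (intro allI equalityI)
  fix n
  show "p n ` p (Suc n) ` Y (Suc (Suc n)) \<subseteq> p n ` Y (Suc n)"
    using cond1 by (intro image_mono) blast
  show "p n ` Y (Suc n) \<subseteq> p n ` p (Suc n) ` Y (Suc (Suc n))"
  proof
    fix b assume "b \<in> p n ` Y (Suc n)"
    then have "b \<in> p n ` X (Suc n)" using Y_sub by blast
    then obtain x where x: "x \<in> inverse_limit X p" "x n = b"
      using lift_thread[OF p_maps mlc] by blast
    have "x (Suc (Suc n)) \<in> Y (Suc (Suc n))" using cond2[OF x(1)] .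
    moreover have "p n (p (Suc n) (x (Suc (Suc n)))) = b"
      using x unfolding inverse_limit_def by simp
    ultimately show "b \<in> p n ` p (Suc n) ` Y (Suc (Suc n))" by (metis imageI)
  qed
qed

end
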